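(* Let $\lambda_1\ge\lambda_2\ge\dots>0$ with $\lambda_m\to0$, and for $\delta>0$, $d\in\mathbb N$ let $i_d(\delta^2)=\min\{i\in\mathbb N:\lambda_i\lambda_{i+1}\cdots\lambda_{i+d-1}\le\delta^2\}$. Let $n^{\rm ent}(\delta,1)=\#\{m\in\mathbb N:\lambda_m>\delta^2\}$ and $n^{\rm asy}(\epsilon,d)=\#\{k\in\mathbb N^d:k_1<k_2<\dots<k_d,\ \prod_{l=1}^d\lambda_{k_l}>\epsilon^2\}$. Then for every $\epsilon>0$, $n^{\rm asy}(\epsilon,1)=n^{\rm ent}(\epsilon,1)$, and for $d\ge2$ $$n^{\rm asy}(\epsilon,d)=\sum_{l_1=2}^{i_d(\epsilon^2)}\ \sum_{l_2=l_1+1}^{i_{d-1}(\epsilon^2/\lambda_{l_1-1})}\cdots\sum_{l_{d-1}=l_{d-2}+1}^{i_2(\epsilon^2/[\lambda_{l_1-1}\cdots\lambda_{l_{d-2}-1}])}\Big[n^{\rm ent}\big(\epsilon/\sqrt{\lambda_{l_1-1}\cdots\lambda_{l_{d-1}-1}},1\big)-l_{d-1}+1\Big],$$ with empty sums equal to zero.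
   Context: Here $\lambda=(\lambda_m)$ are the squared singular values of a compact linear operator $S_1:H_1\to G_1$, and $n^{\rm asy}(\epsilon,d)$ is the information complexity (absolute error, worst case) of $S_1^{\otimes d}$ restricted to the fully antisymmetric subspace of $H_1^{\otimes d}$ (i.e. $I_d=\{1,\dots,d\}$), and $n^{\rm ent}(\delta,1)$ that of $S_1$ itself. *)

theory Defs
  imports Complex_Main
begin

text \<open>Sequences lam are indexed from 1 (the value lam 0 is irrelevant).\<close>

definition i_idx :: "(nat \<Rightarrow> real) \<Rightarrow> nat \<Rightarrow> real \<Rightarrow> nat" where
  "i_idx lam d x = (LEAST i. 1 \<le> i \<and> (\<Prod>j\<in>{i..<i+d}. lam j) \<le> x)"

definition n_ent :: "(nat \<Rightarrow> real) \<Rightarrow> real \<Rightarrow> nat" where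
  "n_ent lam \<delta> = card {m. 1 \<le> m \<and> lam m > \<delta>\<^sup>2}"

definition n_asy :: "(nat \<Rightarrow> real) \<Rightarrow> real \<Rightarrow> nat \<Rightarrow> nat" where
  "n_asy lam \<epsilon> d = card {ks. length ks = d \<and> sorted_wrt (<) ks \<and> (\<forall>k\<in>set ks. 1 \<le> k)
        \<and> prod_list (map lam ks) > \<epsilon>\<^sup>2}"

text \<open>Nested sum: r = number of remaining summation indices, prev = previous index
  (l_0 = 1), p = product lam(l_1 - 1) ... lam(l_t - 1) accumulated so far.\<close>
fun nest :: "(nat \<Rightarrow> real) \<Rightarrow> real \<Rightarrow> nat \<Rightarrow> nat \<Rightarrow> real \<Rightarrow> int" where
  "nest lam \<epsilon> 0 prev p = int (n_ent lam (\<epsilon> / sqrt p)) - int prev + 1"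
| "nest lam \<epsilon> (Suc r) prev p =
     (\<Sum>l\<in>{prev+1 .. i_idx lam (Suc (Suc r)) (\<epsilon>\<^sup>2 / p)}. nest lam \<epsilon> r l (p * lam (l - 1)))"

end

theory Submission
  imports Defs
begin

definition PP :: "(nat \<Rightarrow> real) \<Rightarrow> nat \<Rightarrow> nat \<Rightarrow> real" where
  "PP lam a n = (\<Prod>j\<in>{a..<a+n}. lam j)"

definition AA :: "(nat \<Rightarrow> real) \<Rightarrow> nat \<Rightarrow> nat \<Rightarrow> real \<Rightarrow> nat list set" where
  "AA lam a n x = {ks. length ks = n \<and> sorted_wrt (<) ks \<and> (\<forall>k\<in>set ks. a \<le> k)
        \<and> prod_list (map lam ks) > x}"

lemma PP_Suc: "PP lam a (Suc n) = lam a * PP lam (Suc a) n"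
  unfolding PP_def by (subst prod.atLeast_Suc_lessThan) auto

lemma PP_Suc2: "PP lam a (Suc n) = PP lam a n * lam (a + n)"
  unfolding PP_def by (simp add: prod.atLeastLessThan_Suc)

context
  fixes lam :: "nat \<Rightarrow> real"
  assumes mono: "\<And>m. 1 \<le> m \<Longrightarrow> lam (Suc m) \<le> lam m"
    and pos: "\<And>m. 1 \<le> m \<Longrightarrow> lam m > 0"
    and lim: "lam \<longlonglongrightarrow> 0"
begin

lemma anti: "1 \<le> m \<Longrightarrow> m \<le> n \<Longrightarrow> lam n \<le> lam m"
proof -
  assume m: "1 \<le> m" and mn: "m \<le> n"
  from mn show ?thesis
  proof (induction n rule: dec_induct)
    case base then show ?case by simp
  next
    case (step n) then show ?case using mono[of n] m by simp
  qed
qed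

lemma PP_nonneg: "1 \<le> a \<Longrightarrow> PP lam a n \<ge> 0"
  unfolding PP_def by (rule prod_nonneg) (use pos in \<open>auto intro: less_imp_le\<close>)

lemma PP_pos: "1 \<le> a \<Longrightarrow> PP lam a n > 0"
  unfolding PP_def by (rule prod_pos) (use pos in auto)

lemma PP_anti: "1 \<le> a \<Longrightarrow> a \<le> b \<Longrightarrow> PP lam b n \<le> PP lam a n"
proof (induction n)
  case 0 then show ?case by (simp add: PP_def)
next
  case (Suc n)
  have "PP lam b n * lam (b + n) \<le> PP lam a n * lam (a + n)"
    using Suc anti[of "a+n" "b+n"] PP_nonneg[of b n] pos[of "b+n"]
    by (intro mult_mono) auto
  then show ?case by (simp add: PP_Suc2)
qed

lemma list_le_PP: "sorted_wrt (<) ks \<Longrightarrow> \<forall>k\<in>set ks. a \<le> k \<Longrightarrow> 1 \<le> a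
   \<Longrightarrow> prod_list (map lam ks) \<le> PP lam a (length ks)"
proof (induction ks arbitrary: a)
  case Nil then show ?case by (simp add: PP_def)
next
  case (Cons k ks)
  have h1: "\<forall>j\<in>set ks. Suc a \<le> j" using Cons.prems by auto
  have "prod_list (map lam ks) \<le> PP lam (Suc a) (length ks)"
    using Cons h1 by auto
  moreover have "prod_list (map lam ks) \<ge> 0"
    using Cons.prems pos by (intro prod_list_nonneg) (force intro: less_imp_le)
  moreover have "lam k \<le> lam a" using Cons.prems anti by auto
  moreover have "lam k \<ge> 0" using Cons.prems pos[of k] by auto
  ultimately have "lam k * prod_list (map lam ks) \<le> lam a * PP lam (Suc a) (length ks)"
    using PP_nonneg[of "Suc a" "length ks"] by (intro mult_mono) auto
  then show ?case by (simp add: PP_Suc)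
qed

lemma eventually_small: "x > 0 \<Longrightarrow> \<exists>N. \<forall>n\<ge>N. lam n < x"
proof -
  assume "x > 0"
  then have "eventually (\<lambda>n. lam n < x) sequentially"
    using order_tendstoD(2)[OF lim] by auto
  then show ?thesis by (simp add: eventually_sequentially)
qed

lemma finite_big: "x > 0 \<Longrightarrow> finite {k. lam k > x}"
proof -
  assume "x > 0"
  then obtain N where N: "\<forall>n\<ge>N. lam n < x" using eventually_small by blast
  have "{k. lam k > x} \<subseteq> {..<N}" using N by (auto simp: not_less[symmetric])
  then show ?thesis using finite_subset by blast
qed

lemma exists_small_PP: "x > 0 \<Longrightarrow> \<exists>i. 1 \<le> i \<and> PP lam i (Suc n) \<le> x"
proof -
  assume x: "x > 0"
  obtain N where N: "\<forall>n\<ge>N. lam n < min 1 x" using eventually_small[of "min 1 x"] x by auto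
  define i where "i = max 1 N"
  have "PP lam i (Suc m) < x" for m
  proof (induction m)
    case 0 then show ?case using N by (simp add: PP_def i_def)
  next
    case (Suc m)
    have "lam (i + Suc m) < 1" using N by (simp add: i_def)
    moreover have "PP lam i (Suc m) \<ge> 0" using PP_nonneg by (simp add: i_def)
    ultimately have "PP lam i (Suc m) * lam (i + Suc m) \<le> PP lam i (Suc m)"
      by (simp add: mult_left_le)
    then show ?case using Suc by (simp add: PP_Suc2[of lam i "Suc m"])
  qed
  then show ?thesis by (intro exI[of _ i]) (auto simp: i_def less_imp_le)
qed

lemma i_idx_PP: "i_idx lam d x = (LEAST i. 1 \<le> i \<and> PP lam i d \<le> x)"
  unfolding i_idx_def PP_def by simp

lemma main:
  fixes \<epsilon> :: real
  assumes eps: "\<epsilon> > 0"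
  shows "1 \<le> prev \<Longrightarrow> p > 0 \<Longrightarrow> (prev = 1 \<or> PP lam prev (Suc r) > \<epsilon>\<^sup>2 / p) \<Longrightarrow>
    finite (AA lam prev (Suc r) (\<epsilon>\<^sup>2 / p)) \<and>
    int (card (AA lam prev (Suc r) (\<epsilon>\<^sup>2 / p))) = nest lam \<epsilon> r prev p"
proof (induction r arbitrary: prev p)
  case 0
  define x where "x = \<epsilon>\<^sup>2 / p"
  have x: "x > 0" using eps 0 by (simp add: x_def)
  define B where "B = {k. prev \<le> k \<and> lam k > x}"
  have AB: "AA lam prev (Suc 0) x = (\<lambda>k. [k]) ` B"
    unfolding AA_def B_def by (auto simp: length_Suc_conv)
  have finB: "finite B" using finite_big[OF x] unfolding B_def by (rule rev_finite_subset) auto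
  have cardA: "card (AA lam prev (Suc 0) x) = card B"
    unfolding AB by (rule card_image) (auto simp: inj_on_def)
  have sq: "(\<epsilon> / sqrt p)\<^sup>2 = x" using 0 by (simp add: x_def power_divide)
  have split: "{m. 1 \<le> m \<and> lam m > x} = {1..<prev} \<union> B"
  proof -
    have "lam m > x" if "1 \<le> m" "m < prev" for m
    proof -
      have "prev \<noteq> 1" using that by auto
      then have "lam prev > x" using 0 by (simp add: PP_def x_def)
      moreover have "lam prev \<le> lam m" using anti that by auto
      ultimately show ?thesis by simp
    qed
    then show ?thesis unfolding B_def using 0 by auto
  qed
  have "n_ent lam (\<epsilon> / sqrt p) = (prev - 1) + card B"
    unfolding n_ent_def sq split using finB by (subst card_Un_disjoint) (auto simp: B_def)
  then show ?case using finB cardA AB 0 by (simp add: x_def[symmetric])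
next
  case (Suc r)
  define x where "x = \<epsilon>\<^sup>2 / p"
  have x: "x > 0" using eps Suc by (simp add: x_def)
  define I where "I = i_idx lam (Suc (Suc r)) x"
  have ex: "\<exists>i. 1 \<le> i \<and> PP lam i (Suc (Suc r)) \<le> x" using exists_small_PP[OF x] by blast
  have I: "1 \<le> I \<and> PP lam I (Suc (Suc r)) \<le> x"
    unfolding I_def i_idx_PP using ex by (rule LeastI_ex)
  have notI: "PP lam k (Suc (Suc r)) > x" if "1 \<le> k" "k < I" for k
    using not_less_Least[of k "\<lambda>i. 1 \<le> i \<and> PP lam i (Suc (Suc r)) \<le> x"] that
    unfolding I_def i_idx_PP by auto
  define F where "F l = AA lam l (Suc r) (\<epsilon>\<^sup>2 / (p * lam (l - 1)))" for l
  have IH: "finite (F l) \<and> int (card (F l)) = nest lam \<epsilon> r l (p * lam (l - 1))"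
    if l: "l \<in> {prev+1..I}" for l
  proof -
    have l1: "1 \<le> l - 1" "l - 1 < I" using l Suc.prems by auto
    have lp: "lam (l - 1) > 0" using pos l1 by auto
    have "PP lam (l - 1) (Suc (Suc r)) > x" using notI l1 by auto
    moreover have "PP lam (l - 1) (Suc (Suc r)) = lam (l - 1) * PP lam l (Suc r)"
      using l1 by (simp add: PP_Suc)
    ultimately have "PP lam l (Suc r) > \<epsilon>\<^sup>2 / (p * lam (l - 1))"
      using lp Suc.prems by (simp add: x_def field_simps)
    then show ?thesis unfolding F_def
      using Suc.IH[of l "p * lam (l - 1)"] l Suc.prems lp by auto
  qed
  have eq: "AA lam prev (Suc (Suc r)) x = (\<Union>l\<in>{prev+1..I}. (Cons (l - 1)) ` F l)"
  proof (rule set_eqI, rule iffI)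
    fix ks assume ks: "ks \<in> AA lam prev (Suc (Suc r)) x"
    then obtain k ks' where kk: "ks = k # ks'" "length ks' = Suc r"
      unfolding AA_def by (auto simp: length_Suc_conv)
    have k1: "prev \<le> k" and srt: "sorted_wrt (<) ks'" and gt: "\<forall>j\<in>set ks'. k < j"
      and all: "\<forall>j\<in>set ks'. prev \<le> j"
      and pr: "lam k * prod_list (map lam ks') > x"
      using ks kk unfolding AA_def by auto
    have lk: "lam k > 0" using pos k1 Suc.prems by auto
    have "k < I"
    proof (rule ccontr)
      assume "\<not> k < I"
      then have "PP lam k (Suc (Suc r)) \<le> x" using PP_anti[of I k] I by (meson not_less order_trans)
      moreover have "prod_list (map lam ks) \<le> PP lam k (length ks)"
        using ks kk k1 Suc.prems unfolding AA_def by (intro list_le_PP) auto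
      ultimately show False using pr kk by simp
    qed
    moreover have "ks' \<in> F (Suc k)"
      unfolding F_def AA_def using srt gt kk pr lk Suc.prems
      by (auto simp: x_def field_simps Suc_le_eq)
    ultimately show "ks \<in> (\<Union>l\<in>{prev+1..I}. (Cons (l - 1)) ` F l)"
      using kk k1 by (intro UN_I[of "Suc k"]) auto
  next
    fix ks assume "ks \<in> (\<Union>l\<in>{prev+1..I}. (Cons (l - 1)) ` F l)"
    then obtain l ks' where l: "l \<in> {prev+1..I}" "ks' \<in> F l" "ks = (l - 1) # ks'" by auto
    have lp: "lam (l - 1) > 0" using pos l Suc.prems by auto
    have "lam (l - 1) * prod_list (map lam ks') > x"
      using l(2) lp Suc.prems unfolding F_def AA_def by (auto simp: x_def field_simps)
    then show "ks \<in> AA lam prev (Suc (Suc r)) x"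
      using l unfolding F_def AA_def by force
  qed
  have fin: "finite (AA lam prev (Suc (Suc r)) x)" unfolding eq using IH by auto
  have "card (AA lam prev (Suc (Suc r)) x) = (\<Sum>l\<in>{prev+1..I}. card ((Cons (l - 1)) ` F l))"
    unfolding eq using IH Suc.prems by (intro card_UN_disjoint) auto
  also have "\<dots> = (\<Sum>l\<in>{prev+1..I}. card (F l))"
    by (intro sum.cong refl card_image) auto
  finally have "int (card (AA lam prev (Suc (Suc r)) x)) = (\<Sum>l\<in>{prev+1..I}. int (card (F l)))"
    by simp
  also have "\<dots> = (\<Sum>l\<in>{prev+1..I}. nest lam \<epsilon> r l (p * lam (l - 1)))"
    using IH by (intro sum.cong) auto
  finally show ?case using fin by (simp add: I_def x_def)
qed

end

theorem proposition8:
  fixes lam :: "nat \<Rightarrow> real" and \<epsilon> :: real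
  assumes mono: "\<And>m. 1 \<le> m \<Longrightarrow> lam (Suc m) \<le> lam m"
    and pos: "\<And>m. 1 \<le> m \<Longrightarrow> lam m > 0"
    and lim: "lam \<longlonglongrightarrow> 0"
    and eps: "\<epsilon> > 0"
  shows "n_asy lam \<epsilon> 1 = n_ent lam \<epsilon>
    \<and> (\<forall>d\<ge>2. int (n_asy lam \<epsilon> d) = nest lam \<epsilon> (d - 1) 1 1)"
proof -
  have na: "n_asy lam \<epsilon> d = card (AA lam 1 d (\<epsilon>\<^sup>2 / 1))" for d
    unfolding n_asy_def AA_def by simp
  note M = main[OF mono pos lim eps, of 1 1]
  have "int (n_asy lam \<epsilon> 1) = int (n_ent lam \<epsilon>)"
    using M[of 0] unfolding na by simp
  moreover have "int (n_asy lam \<epsilon> d) = nest lam \<epsilon> (d - 1) 1 1" if "d \<ge> 2" for d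
    using M[of "d - 1"] that unfolding na by (simp add: Suc_diff_1 del: nest.simps)
  ultimately show ?thesis by simp
qed

end
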